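(* Let $G$ be an abelian group and $S\subset G$ a subset, and let $\Gamma(G,S)$ be the Cayley sum graph. \begin{enumerate} \item If $S$ is a Sidon set in $G$, then the $4$-cycle $C_4$ is not a subgraph of $\Gamma(G,S)$. \item If $S$ is a partial symmetric Sidon set in $G$, then the complete bipartite graph $K_{2,3}$ is not a subgraph of $\Gamma(G,S)$. \end{enumerate}
   Context: The Cayley sum graph $\Gamma(G,S)$ has vertex set $G$, with $x$ and $y$ joined by an edge (a loop if $x=y$) if and only if $x+y\in S$. A subset $S\subset G$ is a Sidon set if every solution $(\alpha,\beta,\gamma,\delta)\in S^4$ of $\alpha+\beta=\gamma+\delta$ satisfies $\alpha\in\{\gamma,\delta\}$. $S$ is a partial symmetric Sidon set with center $a_0\in S$ if every solution $(\alpha,\beta,\gamma,\delta)\in S^4$ of $\alpha+\beta=\gamma+\delta$ satisfies either $\alpha\in\{\gamma,\delta\}$ or $\alpha+\beta=\gamma+\delta=a_0$; $S$ is a partial symmetric Sidon set if it is one with center some $a_0\in S$. "$H$ is a subgraph" means there is an injective map from the vertices of $H$ to $G$ sending edges of $H$ to edges of $\Gamma(G,S)$. *)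

theory Defs
  imports Main
begin

definition cayley_sum_edge :: "'a::ab_group_add set \<Rightarrow> 'a \<Rightarrow> 'a \<Rightarrow> bool" where
  "cayley_sum_edge S x y \<longleftrightarrow> x + y \<in> S"

definition sidon_set :: "'a::ab_group_add set \<Rightarrow> bool" where
  "sidon_set S \<longleftrightarrow> (\<forall>\<alpha>\<in>S. \<forall>\<beta>\<in>S. \<forall>\<gamma>\<in>S. \<forall>\<delta>\<in>S.
      \<alpha> + \<beta> = \<gamma> + \<delta> \<longrightarrow> \<alpha> \<in> {\<gamma>, \<delta>})"

definition partial_symmetric_sidon_center :: "'a::ab_group_add set \<Rightarrow> 'a \<Rightarrow> bool" where
  "partial_symmetric_sidon_center S a0 \<longleftrightarrow> a0 \<in> S \<and>
     (\<forall>\<alpha>\<in>S. \<forall>\<beta>\<in>S. \<forall>\<gamma>\<in>S. \<forall>\<delta>\<in>S.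
        \<alpha> + \<beta> = \<gamma> + \<delta> \<longrightarrow> \<alpha> \<in> {\<gamma>, \<delta>} \<or> (\<alpha> + \<beta> = a0 \<and> \<gamma> + \<delta> = a0))"

definition partial_symmetric_sidon :: "'a::ab_group_add set \<Rightarrow> bool" where
  "partial_symmetric_sidon S \<longleftrightarrow> (\<exists>a0. partial_symmetric_sidon_center S a0)"

text \<open>A graph H with vertex set V and edge set E (unordered edges as pairs) is a subgraph
  of the Cayley sum graph if there is an injective map V \<rightarrow> G sending edges to edges.\<close>
definition subgraph_of_cayley_sum :: "'v set \<Rightarrow> ('v \<times> 'v) set \<Rightarrow> 'a::ab_group_add set \<Rightarrow> bool" where
  "subgraph_of_cayley_sum V E S \<longleftrightarrow>
     (\<exists>f :: 'v \<Rightarrow> 'a. inj_on f V \<and> (\<forall>(u, w)\<in>E. cayley_sum_edge S (f u) (f w)))"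

definition C4_vertices :: "nat set" where "C4_vertices = {0, 1, 2, 3}"
definition C4_edges :: "(nat \<times> nat) set" where
  "C4_edges = {(0, 1), (1, 2), (2, 3), (3, 0)}"

definition K23_vertices :: "nat set" where "K23_vertices = {0, 1, 2, 3, 4}"
definition K23_edges :: "(nat \<times> nat) set" where
  "K23_edges = {(i, j). i \<in> {0, 1} \<and> j \<in> {2, 3, 4}}"

end

theory Submission
  imports Defs
begin

lemma part1:
  fixes S :: "'a::ab_group_add set"
  assumes "sidon_set S"
  shows "\<not> subgraph_of_cayley_sum C4_vertices C4_edges S"
proof
  assume "subgraph_of_cayley_sum C4_vertices C4_edges S"
  then obtain f :: "nat \<Rightarrow> 'a" where inj: "inj_on f C4_vertices"
    and e: "\<forall>(u, w)\<in>C4_edges. cayley_sum_edge S (f u) (f w)"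
    unfolding subgraph_of_cayley_sum_def by blast
  have s: "f 0 + f 1 \<in> S" "f 1 + f 2 \<in> S" "f 2 + f 3 \<in> S" "f 3 + f 0 \<in> S"
    using e by (auto simp: C4_edges_def cayley_sum_edge_def)
  have "(f 0 + f 1) + (f 2 + f 3) = (f 1 + f 2) + (f 3 + f 0)"
    by (simp add: algebra_simps)
  with assms s have "f 0 + f 1 \<in> {f 1 + f 2, f 3 + f 0}"
    unfolding sidon_set_def by blast
  then have "f 0 = f 2 \<or> f 1 = f 3" by (auto simp: add.commute)
  moreover have "f 0 \<noteq> f 2" "f 1 \<noteq> f 3"
    using inj_onD[OF inj] unfolding C4_vertices_def by fastforce+
  ultimately show False by blast
qed

lemma part2:
  fixes S :: "'a::ab_group_add set"
  assumes "partial_symmetric_sidon S"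
  shows "\<not> subgraph_of_cayley_sum K23_vertices K23_edges S"
proof
  assume "subgraph_of_cayley_sum K23_vertices K23_edges S"
  then obtain f :: "nat \<Rightarrow> 'a" where inj: "inj_on f K23_vertices"
    and e: "\<forall>(u, w)\<in>K23_edges. cayley_sum_edge S (f u) (f w)"
    unfolding subgraph_of_cayley_sum_def by blast
  obtain a0 where c: "partial_symmetric_sidon_center S a0"
    using assms unfolding partial_symmetric_sidon_def by blast
  have s: "f i + f j \<in> S" if "i \<in> {0,1}" "j \<in> {2,3,4}" for i j
  proof -
    have "(i, j) \<in> K23_edges" using that by (simp add: K23_edges_def)
    with e have "cayley_sum_edge S (f i) (f j)" by fast
    then show ?thesis by (simp add: cayley_sum_edge_def)
  qed
  have d01: "f 0 \<noteq> f 1" using inj_onD[OF inj] unfolding K23_vertices_def by fastforce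
  have key: "f 0 + f j + (f 1 + f k) = a0"
    if j: "j \<in> {2,3,4}" and k: "k \<in> {2,3,4}" and jk: "f j \<noteq> f k" for j k
  proof -
    have m: "f 0 + f j \<in> S" "f 1 + f k \<in> S" "f 0 + f k \<in> S" "f 1 + f j \<in> S"
      using s j k by auto
    have eq: "(f 0 + f j) + (f 1 + f k) = (f 0 + f k) + (f 1 + f j)"
      by (simp add: algebra_simps)
    have "f 0 + f j \<notin> {f 0 + f k, f 1 + f j}" using jk d01 by simp
    have "\<forall>\<alpha>\<in>S. \<forall>\<beta>\<in>S. \<forall>\<gamma>\<in>S. \<forall>\<delta>\<in>S.
        \<alpha> + \<beta> = \<gamma> + \<delta> \<longrightarrow> \<alpha> \<in> {\<gamma>, \<delta>} \<or> (\<alpha> + \<beta> = a0 \<and> \<gamma> + \<delta> = a0)"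
      using c unfolding partial_symmetric_sidon_center_def by blast
    then have "f 0 + f j \<in> {f 0 + f k, f 1 + f j} \<or> ((f 0 + f j) + (f 1 + f k) = a0 \<and> (f 0 + f k) + (f 1 + f j) = a0)"
      using m eq by blast
    with \<open>f 0 + f j \<notin> {f 0 + f k, f 1 + f j}\<close> show ?thesis by blast
  qed
  have d: "f 2 \<noteq> f 3" "f 2 \<noteq> f 4" "f 3 \<noteq> f 4"
    using inj_onD[OF inj] unfolding K23_vertices_def by fastforce+
  have "f 0 + f 2 + (f 1 + f 3) = a0" using key[of 2 3] d by simp
  moreover have "f 0 + f 2 + (f 1 + f 4) = a0" using key[of 2 4] d by simp
  ultimately have "(f 0 + f 2 + f 1) + f 3 = (f 0 + f 2 + f 1) + f 4" by (metis add.assoc)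
  then have "f 3 = f 4" by simp
  with d show False by simp
qed

theorem proposition3p1:
  fixes S :: "'a::ab_group_add set"
  shows "(sidon_set S \<longrightarrow> \<not> subgraph_of_cayley_sum C4_vertices C4_edges S)
    \<and> (partial_symmetric_sidon S \<longrightarrow> \<not> subgraph_of_cayley_sum K23_vertices K23_edges S)"
  using part1 part2 by blast

end
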